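(* The degrees of the state polynomials of 2-bridge knots are independent of the degrees of their Alexander polynomials. Specifically: (i) for every $N$ there exists a 2-bridge knot having an essential spanning surface whose state polynomial is linear (degree 1) while its Alexander polynomial has degree at least $N$ (e.g. the $(2,m)$ torus knot, $m$ odd, has a state polynomial of degree $1$ and Alexander polynomial of degree $m-1$); (ii) for every $N$ there exists a 2-bridge knot whose Alexander polynomial is quadratic and which has an essential spanning surface whose state polynomial has degree at least $N$ (e.g. the 2-bridge knot with continued fraction expansion $[2i,2j]$ has quadratic Alexander polynomial and state polynomials of degrees $2i$ and $2j$).
   Context: Let $K=K(\alpha,\beta)$ be a 2-bridge knot. Essential spanning surfaces $S$ ($\partial S=K$, incompressible and $\partial$-incompressible in the knot exterior) are, by Hatcher–Thurston, isotopic to standard plumbed surfaces associated to continued fraction expansions $\beta/\alpha=r+\cfrac{1}{n_1+\cfrac{1}{\cdots+\cfrac{1}{n_k}}}$, $|n_i|\ge2$, written $[n_1,\dots,n_k]$: $k$ vertically stacked bands, the $i$-th with $n_i$ half-twists, each with a parallel untwisted band, joined by horizontal disks at levels $0,\dots,k$. The curve system $x_1,\dots,x_k$ consists of the cores of the $k$ boxes; $x_i\cap x_{i+1}$ is one point, others disjoint. A state matrix $V_S$ has entries $v_{ij}=\mathrm{lk}(x_i,x_j^{i*})$ for $i\neq j$, where $x_j^{i*}$ is $x_j$ pushed off along a chosen normal near the intersection point with $x_i$ (and equal to $x_j$ if disjoint), and $v_{ii}=\frac12\mathrm{lk}(x_i,\tau(x_i))$, $\tau(x_i)$ the double push-off of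 $x_i$ to both sides of $S$. The state polynomial is $\Delta_S(t)=\det(V_S-tV_S^T)$ up to units $\pm t^m$, of degree $k$. When $S$ is orientable (all $n_i$ even; this is the unique Seifert surface among them, of minimal genus), $\Delta_S$ is the Alexander polynomial of $K$. *)

theory Defs
  imports "Jordan_Normal_Form.Determinant" "HOL-Computational_Algebra.Polynomial"
begin

text \<open>Combinatorial model (via Hatcher--Thurston) of 2-bridge knots, their essential
spanning surfaces (continued fraction expansions) and their state matrices.\<close>

text \<open>2-bridge knot K(alpha,beta): alpha odd (a knot, not a link), alpha > 1,
0 < beta < alpha, gcd(alpha,beta) = 1.\<close>
definition two_bridge_knot :: "int \<Rightarrow> int \<Rightarrow> bool" where
  "two_bridge_knot \<alpha> \<beta> \<longleftrightarrow> odd \<alpha> \<and> 1 < \<alpha> \<and> 0 < \<beta> \<and> \<beta> < \<alpha> \<and> coprime \<alpha> \<beta>"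

fun cf :: "int list \<Rightarrow> rat" where
  "cf [] = 0"
| "cf (n # ns) = 1 / (of_int n + cf ns)"

text \<open>Essential spanning surfaces of K(alpha,beta), represented by the continued fraction
expansion [n1,...,nk] (|ni| >= 2) of the associated standard plumbed surface.\<close>
definition essential_surface :: "int \<Rightarrow> int \<Rightarrow> int list \<Rightarrow> bool" where
  "essential_surface \<alpha> \<beta> ns \<longleftrightarrow> ns \<noteq> [] \<and> (\<forall>n \<in> set ns. 2 \<le> \<bar>n\<bar>) \<and>
     (\<exists>r::int. of_int \<beta> / of_int \<alpha> = of_int r + cf ns)"

definition orientable_surface :: "int list \<Rightarrow> bool" where
  "orientable_surface ns \<longleftrightarrow> (\<forall>n \<in> set ns. even n)"

text \<open>Diagonal: half the linking number of x_i with its double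
push-off, n_i/2. Adjacent cores x_i, x_(i+1) meet once; the push-off direction chosen at that
point (side i) makes one of the two linking numbers 0 and the other +-1 (sign e i).\<close>
definition state_entry :: "int list \<Rightarrow> (nat \<Rightarrow> bool) \<Rightarrow> (nat \<Rightarrow> bool) \<Rightarrow> nat \<Rightarrow> nat \<Rightarrow> rat" where
  "state_entry ns side e i j =
     (if i = j then of_int (ns ! i) / 2
      else if j = Suc i then (if side i then (if e i then 1 else -1) else 0)
      else if i = Suc j then (if side j then 0 else (if e j then 1 else -1))
      else 0)"

definition state_matrix :: "int list \<Rightarrow> (nat \<Rightarrow> bool) \<Rightarrow> (nat \<Rightarrow> bool) \<Rightarrow> rat mat" where
  "state_matrix ns side e = mat (length ns) (length ns) (\<lambda>(i,j). state_entry ns side e i j)"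

definition state_poly :: "int list \<Rightarrow> (nat \<Rightarrow> bool) \<Rightarrow> (nat \<Rightarrow> bool) \<Rightarrow> rat poly" where
  "state_poly ns side e =
     det (mat (length ns) (length ns)
       (\<lambda>(i,j). [: state_matrix ns side e $$ (i,j), - (state_matrix ns side e $$ (j,i)) :]))"

text \<open>Degree of a polynomial up to units +-t^m: highest minus lowest exponent.\<close>
definition poly_span :: "rat poly \<Rightarrow> nat" where
  "poly_span p = degree p - order 0 p"

end

theory Submission
  imports Defs
begin

lemma tri_rec:
  fixes A :: "nat \<Rightarrow> nat \<Rightarrow> 'a::comm_ring_1"
  assumes tri: "\<And>i j. j + 1 < i \<or> i + 1 < j \<Longrightarrow> A i j = 0"
  shows "det (mat (k+2) (k+2) (\<lambda>(i,j). A i j)) =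
     A (k+1) (k+1) * det (mat (k+1) (k+1) (\<lambda>(i,j). A i j))
     - A k (k+1) * A (k+1) k * det (mat k k (\<lambda>(i,j). A i j))"
proof -
  define M where "M = mat (k+2) (k+2) (\<lambda>(i,j). A i j)"
  have Mc: "M \<in> carrier_mat (k+2) (k+2)" unfolding M_def by auto
  have "det M = (\<Sum>j<k+2. M $$ (k+1,j) * cofactor M (k+1) j)"
    by (rule laplace_expansion_row[OF Mc], simp)
  also have "\<dots> = (\<Sum>j<k. M $$ (k+1,j) * cofactor M (k+1) j)
      + M $$ (k+1,k) * cofactor M (k+1) k + M $$ (k+1,k+1) * cofactor M (k+1) (k+1)"
    by (simp add: numeral_2_eq_2)
  also have "(\<Sum>j<k. M $$ (k+1,j) * cofactor M (k+1) j) = 0"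
    by (rule sum.neutral, auto simp: M_def tri)
  also have "mat_delete M (k+1) (k+1) = mat (k+1) (k+1) (\<lambda>(i,j). A i j)"
    by (rule eq_matI, auto simp: M_def mat_delete_def)
  hence "cofactor M (k+1) (k+1) = det (mat (k+1) (k+1) (\<lambda>(i,j). A i j))"
    by (simp add: cofactor_def)
  also have "cofactor M (k+1) k = - det (mat_delete M (k+1) k)"
    by (simp add: cofactor_def)
  also have "det (mat_delete M (k+1) k) = A k (k+1) * det (mat k k (\<lambda>(i,j). A i j))"
  proof -
    define B where "B = mat_delete M (k+1) k"
    have Bc: "B \<in> carrier_mat (k+1) (k+1)" unfolding B_def M_def mat_delete_def by auto
    have Bij: "\<And>i j. i < k+1 \<Longrightarrow> j < k+1 \<Longrightarrow> B $$ (i,j) = A i (if j < k then j else Suc j)"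
      by (simp add: B_def M_def mat_delete_def)
    have "det B = (\<Sum>i<k+1. B $$ (i,k) * cofactor B i k)"
      by (rule laplace_expansion_column[OF Bc], simp)
    also have "\<dots> = (\<Sum>i<k. B $$ (i,k) * cofactor B i k) + B $$ (k,k) * cofactor B k k"
      by simp
    also have "(\<Sum>i<k. B $$ (i,k) * cofactor B i k) = 0"
      by (rule sum.neutral, auto simp: Bij tri)
    also have "mat_delete B k k = mat k k (\<lambda>(i,j). A i j)"
      by (rule eq_matI, auto simp: B_def M_def mat_delete_def)
    hence "cofactor B k k = det (mat k k (\<lambda>(i,j). A i j))"
      by (simp add: cofactor_def)
    also have "B $$ (k,k) = A k (k+1)" using Bij[of k k] by simp
    finally show ?thesis by (simp add: B_def)
  qed
  finally show ?thesis by (simp add: M_def algebra_simps)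
qed

lemma det_1:
  fixes A :: "nat \<Rightarrow> nat \<Rightarrow> 'a::comm_ring_1"
  shows "det (mat 1 1 (\<lambda>(i,j). A i j)) = A 0 0"
proof -
  have Mc: "mat 1 1 (\<lambda>(i,j). A i j) \<in> carrier_mat 1 1" by auto
  show ?thesis
    by (subst laplace_expansion_row[OF Mc, of 0], auto simp: cofactor_def mat_delete_def)
qed


definition SPk :: "int list \<Rightarrow> (nat \<Rightarrow> bool) \<Rightarrow> (nat \<Rightarrow> bool) \<Rightarrow> nat \<Rightarrow> rat poly" where
  "SPk ns side e k = det (mat k k (\<lambda>(i,j). [: state_entry ns side e i j, - state_entry ns side e j i :]))"

lemma state_poly_SPk: "state_poly ns side e = SPk ns side e (length ns)"
  unfolding state_poly_def SPk_def
  by (rule arg_cong[where f=det], rule eq_matI, auto simp: state_matrix_def)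

lemma SPk_rec:
  "SPk ns side e (m+2) = [: of_int (ns!(m+1))/2, - of_int (ns!(m+1))/2 :] * SPk ns side e (m+1)
     + [:0,1:] * SPk ns side e m"
proof -
  let ?A = "\<lambda>i j. [: state_entry ns side e i j, - state_entry ns side e j i :]"
  have tri: "\<And>i j. j + 1 < i \<or> i + 1 < j \<Longrightarrow> ?A i j = 0"
    by (auto simp: state_entry_def)
  have prod: "?A m (m+1) * ?A (m+1) m = [:0,-1:]"
    by (auto simp: state_entry_def)
  have d: "?A (m+1) (m+1) = [: of_int (ns!(m+1))/2, - of_int (ns!(m+1))/2 :]"
    by (simp add: state_entry_def)
  have "SPk ns side e (m+2) = ?A (m+1) (m+1) * SPk ns side e (m+1) - ?A m (m+1) * ?A (m+1) m * SPk ns side e m"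
    unfolding SPk_def by (rule tri_rec[OF tri])
  hence "SPk ns side e (m+2) = [: of_int (ns!(m+1))/2, - of_int (ns!(m+1))/2 :] * SPk ns side e (m+1) - [:0,-1:] * SPk ns side e m"
    by (simp only: prod d)
  moreover have neg: "[:0,-1:] = - ([:0,1:] :: rat poly)" by simp
  ultimately have "SPk ns side e (m+2) = [: of_int (ns!(m+1))/2, - of_int (ns!(m+1))/2 :] * SPk ns side e (m+1) - (- [:0,1:]) * SPk ns side e m"
    by (simp only:)
  thus ?thesis by (simp only: mult_minus_left diff_minus_eq_add)
qed

lemma SPk_0: "SPk ns side e 0 = 1" by (simp add: SPk_def)
lemma SPk_1: "SPk ns side e 1 = [: of_int (ns!0)/2, - of_int (ns!0)/2 :]"
  unfolding SPk_def by (subst det_1, simp add: state_entry_def)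

lemma SPk_props:
  assumes nz: "\<forall>n\<in>set ns. n \<noteq> 0" and k: "k \<le> length ns"
  shows "degree (SPk ns side e k) \<le> k \<and> coeff (SPk ns side e k) k \<noteq> 0 \<and> coeff (SPk ns side e k) 0 \<noteq> 0"
  using k
proof (induction k rule: nat_less_induct)
  case (1 k)
  show ?case
  proof (cases k)
    case 0 thus ?thesis by (simp add: SPk_0)
  next
    case (Suc k')
    show ?thesis
    proof (cases k')
      case 0
      have "ns!0 \<in> set ns" by (rule nth_mem) (use "1.prems" Suc 0 in auto)
      hence "ns!0 \<noteq> 0" using nz by blast
      thus ?thesis using Suc 0 SPk_1[unfolded One_nat_def, of ns side e] by simp
    next
      case (Suc m)
      have kk: "k = m + 2" using Suc \<open>k = Suc k'\<close> by simp
      have "ns!(m+1) \<in> set ns" by (rule nth_mem) (use "1.prems" kk in simp)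
      hence c: "ns!(m+1) \<noteq> 0" using nz by blast
      define c where "c = (of_int (ns!(m+1)) :: rat)/2"
      have c0: "c \<noteq> 0" using c by (simp add: c_def)
      define P where "P = SPk ns side e (m+1)"
      define R where "R = SPk ns side e m"
      have IP: "degree P \<le> m+1 \<and> coeff P (m+1) \<noteq> 0 \<and> coeff P 0 \<noteq> 0"
        unfolding P_def using "1.IH"[rule_format, of "m+1"] "1.prems" kk by simp
      have IR: "degree R \<le> m \<and> coeff R m \<noteq> 0 \<and> coeff R 0 \<noteq> 0"
        unfolding R_def using "1.IH"[rule_format, of "m"] "1.prems" kk by simp
      have eq: "SPk ns side e k = smult c P + pCons 0 (smult (-c) P) + pCons 0 R"
        unfolding kk SPk_rec P_def R_def c_def by (simp add: mult_pCons_left)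
      have d1: "degree (smult c P) \<le> m+2" using IP degree_smult_le[of c P] by linarith
      have d2: "degree (pCons 0 (smult (-c) P)) \<le> m+2"
        using IP degree_smult_le[of "-c" P] degree_pCons_le[of 0 "smult (-c) P"] by linarith
      have d3: "degree (pCons 0 R) \<le> m+2" using IR degree_pCons_le[of 0 R] by linarith
      have "degree (smult c P + pCons 0 (smult (-c) P) + pCons 0 R) \<le> m + 2"
        using d1 d2 d3 by (meson degree_add_le)
      hence dg: "degree (SPk ns side e k) \<le> Suc (Suc m)" unfolding eq by simp
      have cP: "coeff P (Suc (Suc m)) = 0" using IP by (intro coeff_eq_0) auto
      have cR: "coeff R (Suc m) = 0" using IR by (intro coeff_eq_0) auto
      have co1: "coeff (SPk ns side e k) (Suc (Suc m)) = - c * coeff P (Suc m)"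
        unfolding eq using cP cR by simp
      have co2: "coeff (SPk ns side e k) 0 = c * coeff P 0"
        unfolding eq by simp
      show ?thesis using IP c0 dg co1 co2 unfolding kk numeral_2_eq_2
        by simp
    qed
  qed
qed

lemma span_state_poly:
  assumes nz: "\<forall>n\<in>set ns. n \<noteq> 0"
  shows "poly_span (state_poly ns side e) = length ns"
proof -
  let ?p = "SPk ns side e (length ns)"
  have h: "degree ?p \<le> length ns \<and> coeff ?p (length ns) \<noteq> 0 \<and> coeff ?p 0 \<noteq> 0"
    using SPk_props[OF nz order.refl] .
  hence "degree ?p = length ns" by (meson le_antisym le_degree)
  moreover have "order 0 ?p = 0" using h
    by (intro order_0I) (simp add: poly_0_coeff_0)
  ultimately show ?thesis by (simp add: poly_span_def state_poly_SPk)
qed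


definition bnd :: "int list \<Rightarrow> bool" where "bnd ns \<longleftrightarrow> (\<forall>n\<in>set ns. 2 \<le> \<bar>n\<bar>)"

lemma cf_bound: "bnd ns \<Longrightarrow> \<bar>cf ns\<bar> < 1"
proof (induction ns)
  case Nil thus ?case by simp
next
  case (Cons n ns)
  hence h: "\<bar>cf ns\<bar> < 1" "2 \<le> \<bar>n\<bar>" by (auto simp: bnd_def)
  have "2 \<le> \<bar>of_int n :: rat\<bar>" using h(2) by (metis of_int_abs of_int_le_iff of_int_numeral)
  hence "1 < \<bar>of_int n + cf ns\<bar>" using h(1) by linarith
  thus ?case by (simp add: abs_divide divide_less_eq)
qed

lemma cf_nz: "bnd ns \<Longrightarrow> ns \<noteq> [] \<Longrightarrow> cf ns \<noteq> 0"
proof (cases ns)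
  case (Cons n T)
  assume b: "bnd ns"
  hence "\<bar>cf T\<bar> < 1" "2 \<le> \<bar>n\<bar>" using Cons by (auto simp: bnd_def intro!: cf_bound)
  moreover have "2 \<le> \<bar>of_int n :: rat\<bar>" using calculation(2) by (metis of_int_abs of_int_le_iff of_int_numeral)
  ultimately have "of_int n + cf T \<noteq> 0" by linarith
  thus ?thesis using Cons by simp
qed simp

lemma cf_zero_iff: "bnd ns \<Longrightarrow> cf ns = 0 \<longleftrightarrow> ns = []"
  using cf_nz by auto

lemma cf_cons_inv: "cf (n # T) = x \<Longrightarrow> of_int n + cf T = 1 / x"
  by auto

lemma int_target:
  assumes "bnd T" "of_int n + cf T = (of_int m :: rat)"
  shows "T = [] \<and> n = m"
proof -
  have "cf T = of_int (m - n)" using assms(2) by simp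
  moreover have "\<bar>cf T\<bar> < 1" using cf_bound[OF assms(1)] .
  ultimately have "\<bar>m - n\<bar> < 1" by (metis of_int_abs of_int_less_1_iff)
  hence "m = n" by simp
  hence "cf T = 0" using \<open>cf T = _\<close> by simp
  thus ?thesis using cf_zero_iff[OF assms(1)] \<open>m = n\<close> by simp
qed

lemma step_pos:
  assumes "bnd T" "even n" "of_int n + cf T = q" "1 < q" "q < 3"
  shows "n = 2 \<and> cf T = q - 2"
proof -
  have "\<bar>cf T\<bar> < 1" using cf_bound[OF assms(1)] .
  hence "(of_int n :: rat) < 4" "(0::rat) < of_int n" using assms by linarith+
  hence "n < 4" "0 < n" by simp_all
  hence "n = 2" using assms(2) by presburger
  thus ?thesis using assms(3) by simp
qed

lemma step_neg:
  assumes "bnd T" "even n" "of_int n + cf T = q" "-3 < q" "q < -1"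
  shows "n = -2 \<and> cf T = q + 2"
proof -
  have "\<bar>cf T\<bar> < 1" using cf_bound[OF assms(1)] .
  hence "(of_int n :: rat) > -4" "of_int n < (0::rat)" using assms by linarith+
  hence "n > -4" "n < 0" by simp_all
  hence "n = -2" using assms(2) by presburger
  thus ?thesis using assms(3) by simp
qed

definition evl :: "int list \<Rightarrow> bool" where "evl ns \<longleftrightarrow> (\<forall>n\<in>set ns. even n)"

lemma no_odd_recip:
  assumes "bnd S" "evl S" "odd m" "cf S = 1 / of_int m"
  shows False
proof (cases S)
  case Nil thus ?thesis using assms by simp
next
  case (Cons n T)
  have "of_int n + cf T = of_int m" using assms(4) Cons by (simp add: divide_simps split: if_splits)
  hence "n = m" using int_target[of T n m] assms(1) Cons by (simp add: bnd_def)
  thus False using assms Cons by (simp add: evl_def)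
qed

lemma uniq_len:
  assumes "bnd S" "evl S" "s = 1 \<or> s = -1" "1 \<le> j"
    "cf S = of_int s * of_nat j / (of_nat j + 1)"
  shows "length S = j"
  using assms
proof (induction S arbitrary: s j)
  case Nil thus ?case by simp
next
  case (Cons n T)
  have bT: "bnd T" and eT: "evl T" and en: "even n" using Cons.prems by (auto simp: bnd_def evl_def)
  have xnz: "of_int s * of_nat j / (of_nat j + 1) \<noteq> (0::rat)" using Cons.prems by auto
  have q0: "of_int n + cf T = 1 / (of_int s * of_nat j / (of_nat j + 1))"
    using cf_cons_inv[OF Cons.prems(5)] .
  have "1 / (of_int s * of_nat j / (of_nat j + 1)) = of_int s * (1 + 1 / (of_nat j :: rat))"
    using Cons.prems(3,4) by (auto simp: field_simps)
  with q0 have q: "of_int n + cf T = of_int s * (1 + 1 / of_nat j)" by simp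
  have jb: "0 < 1 / (of_nat j :: rat)" "1 / (of_nat j :: rat) \<le> 1" using Cons.prems(4) by auto
  have "cf T = of_int s * (1 / of_nat j - 1)"
  proof (cases "s = 1")
    case True
    from step_pos[OF bT en q[unfolded True]] jb True show ?thesis by auto
  next
    case False
    hence s: "s = -1" using Cons.prems(3) by auto
    from step_neg[OF bT en q[unfolded s]] jb s show ?thesis by auto
  qed
  show ?case
  proof (cases "j = 1")
    case True
    hence "cf T = 0" using \<open>cf T = _\<close> by simp
    thus ?thesis using cf_zero_iff[OF bT] True by simp
  next
    case False
    hence j2: "1 \<le> j - 1" using Cons.prems(4) by simp
    have "cf T = of_int (-s) * of_nat (j-1) / (of_nat (j-1) + 1)"
      using \<open>cf T = _\<close> Cons.prems(4) by (simp add: of_nat_diff field_simps)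
    from Cons.IH[OF bT eT _ j2 this] Cons.prems(3) have "length T = j - 1" by auto
    thus ?thesis using Cons.prems(4) by simp
  qed
qed

fun L :: "int \<Rightarrow> nat \<Rightarrow> int list" where
  "L s 0 = []"
| "L s (Suc j) = (2*s) # L (-s) j"

lemma L_props: "s = 1 \<or> s = -1 \<Longrightarrow> length (L s j) = j \<and> (\<forall>x\<in>set (L s j). x = 2 \<or> x = -2)
   \<and> cf (L s j) = of_int s * of_nat j / (of_nat j + 1)"
proof (induction j arbitrary: s)
  case 0 thus ?case by simp
next
  case (Suc j)
  have IH: "length (L (-s) j) = j \<and> (\<forall>x\<in>set (L (-s) j). x = 2 \<or> x = -2)
   \<and> cf (L (-s) j) = of_int (-s) * of_nat j / (of_nat j + 1)" by (rule Suc.IH) (use Suc.prems in auto)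
  have c: "cf (L s (Suc j)) = 1 / (of_int (2*s) + of_int (-s) * of_nat j / (of_nat j + 1))"
    using IH by simp
  have "1 / (of_int (2*s) + of_int (-s) * of_nat j / (of_nat j + 1)) = of_int s * of_nat (Suc j) / (of_nat (Suc j) + (1::rat))"
    using Suc.prems by (auto simp: field_simps)
  moreover have "\<forall>x\<in>set (L s (Suc j)). x = 2 \<or> x = -2" using IH Suc.prems by auto
  ultimately show ?case using c IH by simp
qed


lemma r_range:
  assumes "0 < x" "x < 1" "x = of_int r + c" "\<bar>c\<bar> < (1::rat)"
  shows "r = 0 \<or> r = 1"
proof -
  have "(of_int r :: rat) > -1" "(of_int r :: rat) < 2" using assms by linarith+
  hence "r > -1" "r < 2" by simp_all
  thus ?thesis by linarith
qed

lemma ess_bnd: "essential_surface a b S \<Longrightarrow> bnd S"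
  by (simp add: essential_surface_def bnd_def)

lemma span_ess: "essential_surface a b S \<Longrightarrow> poly_span (state_poly S side e) = length S"
  by (rule span_state_poly) (auto simp: essential_surface_def)

lemma part1: "\<exists>\<alpha> \<beta> ns. two_bridge_knot \<alpha> \<beta> \<and> essential_surface \<alpha> \<beta> ns \<and>
            (\<forall>side e. poly_span (state_poly ns side e) = 1) \<and>
            (\<exists>S. essential_surface \<alpha> \<beta> S \<and> orientable_surface S) \<and>
            (\<forall>S side e. essential_surface \<alpha> \<beta> S \<and> orientable_surface S \<longrightarrow>
                 N \<le> poly_span (state_poly S side e))"
proof -
  define m :: int where "m = 2 * int N + 3"
  have m3: "3 \<le> m" and om: "odd m" unfolding m_def by auto
  have tb: "two_bridge_knot m 1" using m3 om by (simp add: two_bridge_knot_def)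
  have es: "essential_surface m 1 [m]"
    unfolding essential_surface_def using m3 by (auto intro: exI[of _ 0])
  have sp: "\<forall>side e. poly_span (state_poly [m] side e) = 1"
    using span_ess[OF es] by simp
  define j :: nat where "j = 2 * N + 2"
  have mj: "(of_int m :: rat) = of_nat j + 1" unfolding m_def j_def by simp
  have Lp: "length (L (-1) j) = j \<and> (\<forall>x\<in>set (L (-1) j). x = 2 \<or> x = -2)
     \<and> cf (L (-1) j) = of_int (-1) * of_nat j / (of_nat j + 1)" by (rule L_props) simp
  have exS: "essential_surface m 1 (L (-1) j) \<and> orientable_surface (L (-1) j)"
  proof -
    have "L (-1) j \<noteq> []" using Lp unfolding j_def by auto
    moreover have "\<forall>n\<in>set (L (-1) j). 2 \<le> \<bar>n\<bar> \<and> even n" using Lp by auto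
    moreover have "of_int 1 / of_int m = of_int 1 + cf (L (-1) j)"
      using Lp unfolding mj by (simp add: field_simps)
    ultimately show ?thesis unfolding essential_surface_def orientable_surface_def
      by (metis (no_types, lifting))
  qed
  have all: "N \<le> poly_span (state_poly S side e)"
    if es: "essential_surface m 1 S" and os: "orientable_surface S" for S side e
  proof -
    have b: "bnd S" using ess_bnd[OF es] .
    have ev: "evl S" using os by (simp add: orientable_surface_def evl_def)
    obtain r where r: "of_int 1 / of_int m = of_int r + cf S"
      using es unfolding essential_surface_def by blast
    have x0: "0 < (of_int 1 / of_int m :: rat)" "(of_int 1 / of_int m :: rat) < 1" using m3 by auto
    have "r = 0 \<or> r = 1" by (rule r_range[OF x0 r cf_bound[OF b]])
    hence "length S = j"
    proof
      assume "r = 0"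
      hence "cf S = 1 / of_int m" using r by simp
      from no_odd_recip[OF b ev om this] show ?thesis ..
    next
      assume "r = 1"
      hence "cf S = of_int (-1) * of_nat j / (of_nat j + 1)" using r unfolding mj
        by (simp add: field_simps)
      from uniq_len[OF b ev _ _ this] show ?thesis unfolding j_def by simp
    qed
    thus ?thesis using span_ess[OF es] unfolding j_def by simp
  qed
  show ?thesis using tb es sp exS all by blast
qed

lemma part2: "\<exists>\<alpha> \<beta> ns. two_bridge_knot \<alpha> \<beta> \<and> essential_surface \<alpha> \<beta> ns \<and>
            (\<forall>side e. N \<le> poly_span (state_poly ns side e)) \<and>
            (\<exists>S. essential_surface \<alpha> \<beta> S \<and> orientable_surface S) \<and>
            (\<forall>S side e. essential_surface \<alpha> \<beta> S \<and> orientable_surface S \<longrightarrow>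
                 poly_span (state_poly S side e) = 2)"
proof -
  define J :: nat where "J = N + 1"
  define a :: int where "a = 4 * int J + 1"
  define b :: int where "b = 2 * int J"
  have J1: "1 \<le> J" unfolding J_def by simp
  have cop: "coprime a b"
  proof (rule coprimeI)
    fix c assume "c dvd a" "c dvd b"
    hence "c dvd a - 2 * b" by auto
    moreover have "a - 2 * b = 1" unfolding a_def b_def by simp
    ultimately show "is_unit c" by simp
  qed
  have tb: "two_bridge_knot a b" using J1 cop unfolding two_bridge_knot_def a_def b_def by auto
  have x: "(of_int b / of_int a :: rat) = 2 * of_nat J / (4 * of_nat J + 1)" unfolding a_def b_def by simp
  have Lp: "length (L (-1) (2*J-1)) = 2*J-1 \<and> (\<forall>x\<in>set (L (-1) (2*J-1)). x = 2 \<or> x = -2)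
     \<and> cf (L (-1) (2*J-1)) = of_int (-1) * of_nat (2*J-1) / (of_nat (2*J-1) + 1)" by (rule L_props) simp
  define ns where "ns = 3 # L (-1) (2*J-1)"
  have es: "essential_surface a b ns"
  proof -
    have "\<forall>n\<in>set ns. 2 \<le> \<bar>n\<bar>" using Lp unfolding ns_def by auto
    moreover have "of_int b / of_int a = of_int 0 + cf ns"
    proof -
      have "of_nat (2*J-1) = (2 * of_nat J - 1 :: rat)" using J1 by (simp add: of_nat_diff)
      hence c: "cf (L (-1) (2*J-1)) = - (2 * of_nat J - 1) / (2 * of_nat J)" using Lp J1 by simp
      have "cf ns = 1 / (3 + cf (L (-1) (2*J-1)))" unfolding ns_def by simp
      also have "\<dots> = 2 * of_nat J / (4 * of_nat J + 1)" unfolding c using J1 by (simp add: field_simps)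
      finally show ?thesis unfolding x by simp
    qed
    ultimately show ?thesis unfolding essential_surface_def ns_def by blast
  qed
  have sp: "\<forall>side e. N \<le> poly_span (state_poly ns side e)"
    using span_ess[OF es] Lp J1 unfolding ns_def J_def by simp
  have exS: "essential_surface a b [2, 2 * int J] \<and> orientable_surface [2, 2 * int J]"
  proof -
    have "of_int b / of_int a = of_int 0 + cf [2, 2 * int J]"
      unfolding x using J1 by (simp add: field_simps)
    thus ?thesis unfolding essential_surface_def orientable_surface_def using J1 by auto
  qed
  have all: "poly_span (state_poly S side e) = 2"
    if es: "essential_surface a b S" and os: "orientable_surface S" for S side e
  proof -
    have bS: "bnd S" using ess_bnd[OF es] .
    have ev: "evl S" using os by (simp add: orientable_surface_def evl_def)
    obtain r where r: "of_int b / of_int a = of_int r + cf S"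
      using es unfolding essential_surface_def by blast
    have x0: "0 < (of_int b / of_int a :: rat)" "(of_int b / of_int a :: rat) < 1"
      unfolding x using J1 by (auto simp: field_simps)
    have S0: "S \<noteq> []" using es by (simp add: essential_surface_def)
    then obtain n T where ST: "S = n # T" by (cases S) auto
    have bT: "bnd T" and en: "even n" and eT: "evl T" using bS ev ST by (auto simp: bnd_def evl_def)
    have "r = 0 \<or> r = 1" by (rule r_range[OF x0 r cf_bound[OF bS]])
    hence "length S = 2"
    proof
      assume "r = 0"
      hence "cf (n # T) = 2 * of_nat J / (4 * of_nat J + 1)" using r ST x by simp
      from cf_cons_inv[OF this] have "of_int n + cf T = 2 + 1 / (2 * of_nat J)"
        using J1 by (simp add: field_simps)
      moreover have "1 < 2 + 1 / (2 * (of_nat J :: rat))" "2 + 1 / (2 * (of_nat J :: rat)) < 3"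
        using J1 by (auto simp: field_simps)
      ultimately have "cf T = 1 / (2 * of_nat J)" using step_pos[OF bT en] by force
      moreover have "T \<noteq> []" using calculation J1 by auto
      then obtain n' T' where TT: "T = n' # T'" by (cases T) auto
      ultimately have "of_int n' + cf T' = of_int (2 * int J)" using cf_cons_inv[of n' T'] J1
        by (simp add: field_simps)
      hence "T' = []" using int_target[of T' n' "2 * int J"] bT TT by (simp add: bnd_def)
      thus ?thesis using ST TT by simp
    next
      assume "r = 1"
      hence "cf (n # T) = 2 * of_nat J / (4 * of_nat J + 1) - 1" using r ST x by simp
      from cf_cons_inv[OF this] have "of_int n + cf T = -2 + 1 / (2 * of_nat J + 1)"
        using J1 by (simp add: field_simps)
      moreover have "-3 < -2 + 1 / (2 * (of_nat J :: rat) + 1)" "-2 + 1 / (2 * (of_nat J :: rat) + 1) < -1"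
        using J1 by (auto simp: field_simps)
      ultimately have "cf T = 1 / (2 * of_nat J + 1)" using step_neg[OF bT en] by force
      moreover have "T \<noteq> []" using calculation J1 by auto
      then obtain n' T' where TT: "T = n' # T'" by (cases T) auto
      ultimately have "of_int n' + cf T' = of_int (2 * int J + 1)" using cf_cons_inv[of n' T'] J1
        by (simp add: field_simps)
      hence "n' = 2 * int J + 1" using int_target[of T' n' "2 * int J + 1"] bT TT by (simp add: bnd_def)
      moreover have "even n'" using eT TT by (simp add: evl_def)
      ultimately show ?thesis by simp
    qed
    thus ?thesis using span_ess[OF es] by simp
  qed
  show ?thesis using tb es sp exS all by blast
qed


theorem proposition3p2:
  shows "(\<forall>N::nat. \<exists>\<alpha> \<beta> ns. two_bridge_knot \<alpha> \<beta> \<and> essential_surface \<alpha> \<beta> ns \<and>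
            (\<forall>side e. poly_span (state_poly ns side e) = 1) \<and>
            (\<exists>S. essential_surface \<alpha> \<beta> S \<and> orientable_surface S) \<and>
            (\<forall>S side e. essential_surface \<alpha> \<beta> S \<and> orientable_surface S \<longrightarrow>
                 N \<le> poly_span (state_poly S side e)))
   \<and> (\<forall>N::nat. \<exists>\<alpha> \<beta> ns. two_bridge_knot \<alpha> \<beta> \<and> essential_surface \<alpha> \<beta> ns \<and>
            (\<forall>side e. N \<le> poly_span (state_poly ns side e)) \<and>
            (\<exists>S. essential_surface \<alpha> \<beta> S \<and> orientable_surface S) \<and>
            (\<forall>S side e. essential_surface \<alpha> \<beta> S \<and> orientable_surface S \<longrightarrow>
                 poly_span (state_poly S side e) = 2))"
  using part1 part2 by blast

end
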